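(* Let $M$ be a positive integer and $L$ a positive divisor of $M$ with $L^*>2$, and let $\ell$ be the number of prime divisors of $L$. Then $I_1(L,M)=\varphi(L^* )\big(M^2/L^*-(-1)^\ell\epsilon\big)/8$, where $\epsilon=1$ if $M$ is odd, $\epsilon=2$ if $M\equiv2\bmod4$ and $L^*$ is even, and $\epsilon=0$ otherwise.
   Context: For a positive integer $n$, $n^*$ denotes the product of the distinct prime divisors of $n$, and $\varphi$ is Euler's totient function. For a positive integer $M$, a positive divisor $L$ of $M$ and an integer $k\ge0$, $I_k(L,M)=\sum_t t^k$, the sum over integers $t$ with $0<t<M/2$ and $\gcd(t,L)=1$. *)

theory Defs
  imports "HOL-Number_Theory.Number_Theory"
begin

definition rad :: "nat \<Rightarrow> nat" where
  "rad n = (\<Prod>p\<in>prime_factors n. p)"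

definition Isum :: "nat \<Rightarrow> nat \<Rightarrow> nat \<Rightarrow> nat" where
  "Isum k L M = (\<Sum>t\<in>{t. 0 < t \<and> 2 * t < M \<and> coprime t L}. t ^ k)"

end

theory Submission
  imports Defs
begin

definition GG :: "nat set \<Rightarrow> nat \<Rightarrow> nat" where
  "GG P M = (\<Sum>t\<in>{t. 0 < t \<and> 2 * t < M \<and> (\<forall>q\<in>P. \<not> q dvd t)}. t)"

definition HH :: "nat \<Rightarrow> nat" where
  "HH n = (\<Sum>t\<in>{t. 0 < t \<and> 2 * t < n}. t)"

lemma GG_insert:
  assumes p: "prime p" and pP: "p \<notin> P" and PP: "\<forall>q\<in>P. prime q" and dv: "p dvd M"
  shows "GG P M = GG (insert p P) M + p * GG P (M div p)"
proof -
  define A where "A = {t. 0 < t \<and> 2 * t < M \<and> (\<forall>q\<in>P. \<not> q dvd t)}"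
  define A1 where "A1 = {t. 0 < t \<and> 2 * t < M \<and> (\<forall>q\<in>insert p P. \<not> q dvd t)}"
  define B where "B = {t. 0 < t \<and> 2 * t < M div p \<and> (\<forall>q\<in>P. \<not> q dvd t)}"
  have finA: "finite A" unfolding A_def by (rule finite_subset[of _ "{..<M}"]) auto
  have A: "A = A1 \<union> (\<lambda>s. p * s) ` B"
  proof (rule equalityI; rule subsetI)
    fix t assume t: "t \<in> A"
    show "t \<in> A1 \<union> (\<lambda>s. p * s) ` B"
    proof (cases "p dvd t")
      case False thus ?thesis using t unfolding A_def A1_def by auto
    next
      case True
      then obtain s where s: "t = p * s" by auto
      have pos: "p > 0" using p prime_gt_0_nat by blast
      obtain m where m: "M = p * m" using dv by auto
      have "s \<in> B" unfolding B_def
      proof safe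
        show "0 < s" using t s unfolding A_def by auto
        show "2 * s < M div p" using t s m pos unfolding A_def by auto
        fix q assume "q \<in> P" "q dvd s"
        then show False using t s unfolding A_def by auto
      qed
      thus ?thesis using s by auto
    qed
  next
    fix t assume "t \<in> A1 \<union> (\<lambda>s. p * s) ` B"
    then show "t \<in> A"
    proof
      assume "t \<in> A1" thus ?thesis unfolding A_def A1_def by auto
    next
      assume "t \<in> (\<lambda>s. p * s) ` B"
      then obtain s where s: "s \<in> B" "t = p * s" by auto
      have pos: "p > 0" using p prime_gt_0_nat by blast
      obtain m where m: "M = p * m" using dv by auto
      show ?thesis unfolding A_def
      proof safe
        show "0 < t" using s pos unfolding B_def by auto
        show "2 * t < M" using s m pos unfolding B_def by auto
        fix q assume q: "q \<in> P" "q dvd t"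
        have "prime q" using PP q by auto
        hence "q dvd p \<or> q dvd s" using q s prime_dvd_mult_iff by blast
        moreover have "\<not> q dvd p" using q pP p \<open>prime q\<close> primes_dvd_imp_eq by blast
        ultimately show False using s q unfolding B_def by auto
      qed
    qed
  qed
  have disj: "A1 \<inter> (\<lambda>s. p * s) ` B = {}" unfolding A1_def by auto
  have fin1: "finite A1" using finA A by auto
  have fin2: "finite B" unfolding B_def by (rule finite_subset[of _ "{..<M}"]) (auto dest: less_le_trans[OF _ div_le_dividend])
  have inj: "inj_on (\<lambda>s. p * s) B" using p prime_gt_0_nat by (auto intro: inj_onI)
  have "GG P M = sum id A" unfolding GG_def A_def by simp
  also have "\<dots> = sum id A1 + sum id ((\<lambda>s. p * s) ` B)"
    unfolding A using disj fin1 fin2 by (simp add: sum.union_disjoint)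
  also have "sum id ((\<lambda>s. p * s) ` B) = p * sum id B"
    using inj by (simp add: sum.reindex sum_distrib_left)
  finally show ?thesis unfolding GG_def A1_def B_def by simp
qed

lemma GG_IE:
  assumes "finite P" "\<forall>q\<in>P. prime q" "\<Prod>P dvd M"
  shows "real (GG P M) = (\<Sum>S\<in>Pow P. (-1)^card S * real (\<Prod>S) * real (HH (M div \<Prod>S)))"
  using assms
proof (induction P arbitrary: M rule: finite_induct)
  case empty
  then show ?case by (simp add: GG_def HH_def)
next
  case (insert p P)
  have p: "prime p" using insert by auto
  have pd: "p dvd M" using insert.prems(2) insert.hyps by (auto intro: dvd_trans[rotated])
  have pd2: "p * \<Prod>P dvd M" using insert.prems(2) insert.hyps by simp
  have Pd: "\<Prod>P dvd M div p" using pd2 pd p prime_gt_0_nat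
    by (metis dvd_div_iff_mult mult.commute nat_neq_iff not_less_zero)
  have Pd': "\<Prod>P dvd M" using pd2 by (auto intro: dvd_trans[rotated])
  have e1: "real (GG (insert p P) M) = real (GG P M) - real p * real (GG P (M div p))"
    using GG_insert[OF p insert.hyps(2) _ pd] insert.prems(1) by simp
  have IH1: "real (GG P M) = (\<Sum>S\<in>Pow P. (-1)^card S * real (\<Prod>S) * real (HH (M div \<Prod>S)))"
    using insert.IH insert.prems Pd' by auto
  have IH2: "real (GG P (M div p)) = (\<Sum>S\<in>Pow P. (-1)^card S * real (\<Prod>S) * real (HH (M div p div \<Prod>S)))"
    using insert.IH insert.prems Pd by auto
  have inj: "inj_on (insert p) (Pow P)" using insert.hyps(2)
    by (auto simp: inj_on_def)
  have disj: "Pow P \<inter> insert p ` Pow P = {}" using insert.hyps(2) by auto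
  have fin: "finite (Pow P)" "finite (insert p ` Pow P)" using insert.hyps by auto
  have "(\<Sum>S\<in>Pow (insert p P). (-1)^card S * real (\<Prod>S) * real (HH (M div \<Prod>S)))
     = (\<Sum>S\<in>Pow P. (-1)^card S * real (\<Prod>S) * real (HH (M div \<Prod>S)))
       + (\<Sum>S\<in>insert p ` Pow P. (-1)^card S * real (\<Prod>S) * real (HH (M div \<Prod>S)))"
    unfolding Pow_insert using disj fin by (simp add: sum.union_disjoint)
  also have "(\<Sum>S\<in>insert p ` Pow P. (-1)^card S * real (\<Prod>S) * real (HH (M div \<Prod>S)))
     = (\<Sum>S\<in>Pow P. (-1)^card (insert p S) * real (\<Prod>(insert p S)) * real (HH (M div \<Prod>(insert p S))))"
    using inj by (simp add: sum.reindex)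
  also have "\<dots> = (\<Sum>S\<in>Pow P. - real p * ((-1)^card S * real (\<Prod>S) * real (HH (M div p div \<Prod>S))))"
  proof (rule sum.cong[OF refl])
    fix S assume S: "S \<in> Pow P"
    have fS: "finite S" using S insert.hyps(1) finite_subset by auto
    have pS: "p \<notin> S" using S insert.hyps(2) by auto
    show "(-1)^card (insert p S) * real (\<Prod>(insert p S)) * real (HH (M div \<Prod>(insert p S)))
        = - real p * ((-1)^card S * real (\<Prod>S) * real (HH (M div p div \<Prod>S)))"
      using fS pS by (simp add: div_mult2_eq)
  qed
  also have "\<dots> = - real p * real (GG P (M div p))" using IH2 by (simp add: sum_distrib_left)
  finally show ?case using e1 IH1 by simp
qed

lemma HH_eq: "HH n = (\<Sum>i = Suc 0..(n - 1) div 2. i)"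
  unfolding HH_def by (intro sum.cong) auto

lemma HH_formula:
  "8 * real (HH n) = (if even n then real n ^ 2 - 2 * real n else real n ^ 2 - 1)"
proof -
  define k where "k = (n - 1) div 2"
  have g: "2 * real (HH n) = real k * (real k + 1)"
    unfolding HH_eq k_def[symmetric] using double_gauss_sum_from_Suc_0[of k, where ?'a = real]
    by simp
  consider "n = 0" | m where "n = 2 * m + 2" | m where "n = 2 * m + 1"
    by (metis evenE oddE add_0 mult_2 not0_implies_Suc Suc_eq_plus1 add_Suc_right add_2_eq_Suc' old.nat.exhaust)
  then show ?thesis
  proof cases
    case 1 then show ?thesis by (simp add: HH_def)
  next
    case (2 m)
    then have "k = m" unfolding k_def by simp
    then show ?thesis using g 2 by (simp add: algebra_simps power2_eq_square)
  next
    case (3 m)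
    then have "k = m" unfolding k_def by simp
    then show ?thesis using g 3 by (simp add: algebra_simps power2_eq_square)
  qed
qed

lemma term_formula:
  assumes "d dvd M" "0 < M"
  shows "real d * (8 * real (HH (M div d))) = real M ^ 2 / real d - (if odd (M div d) then real d else 2 * real M)"
proof -
  obtain q where q: "M = d * q" using assms by auto
  have d0: "d > 0" using q assms by (cases "d = 0") auto
  have mq: "M div d = q" using q d0 by simp
  show ?thesis unfolding mq HH_formula using d0 q
    by (simp add: field_simps power2_eq_square)
qed

lemma alt_sum:
  fixes f :: "'a \<Rightarrow> real"
  assumes "finite A"
  shows "(\<Sum>S\<in>Pow A. (-1)^card S * (\<Prod>x\<in>S. f x)) = (\<Prod>x\<in>A. 1 - f x)"
  using assms
proof (induction A rule: finite_induct)
  case empty then show ?case by simp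
next
  case (insert p P)
  have inj: "inj_on (insert p) (Pow P)" using insert.hyps(2)
    by (auto simp: inj_on_def)
  have disj: "Pow P \<inter> insert p ` Pow P = {}" using insert.hyps(2) by auto
  have fin: "finite (Pow P)" "finite (insert p ` Pow P)" using insert.hyps by auto
  have "(\<Sum>S\<in>Pow (insert p P). (-1)^card S * (\<Prod>x\<in>S. f x))
     = (\<Sum>S\<in>Pow P. (-1)^card S * (\<Prod>x\<in>S. f x)) + (\<Sum>S\<in>insert p ` Pow P. (-1)^card S * (\<Prod>x\<in>S. f x))"
    unfolding Pow_insert using disj fin by (simp add: sum.union_disjoint)
  also have "(\<Sum>S\<in>insert p ` Pow P. (-1)^card S * (\<Prod>x\<in>S. f x))
     = (\<Sum>S\<in>Pow P. (-1)^card (insert p S) * (\<Prod>x\<in>insert p S. f x))"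
    using inj by (simp add: sum.reindex)
  also have "\<dots> = (\<Sum>S\<in>Pow P. - f p * ((-1)^card S * (\<Prod>x\<in>S. f x)))"
  proof (rule sum.cong[OF refl])
    fix S assume S: "S \<in> Pow P"
    have fS: "finite S" using S insert.hyps(1) finite_subset by auto
    have pS: "p \<notin> S" using S insert.hyps(2) by auto
    show "(-1)^card (insert p S) * (\<Prod>x\<in>insert p S. f x) = - f p * ((-1)^card S * (\<Prod>x\<in>S. f x))"
      using fS pS by simp
  qed
  also have "\<dots> = - f p * (\<Prod>x\<in>P. 1 - f x)" using insert.IH by (simp add: sum_negf flip: sum_distrib_left)
  finally have X: "(\<Sum>S\<in>Pow (insert p P). (-1)^card S * (\<Prod>x\<in>S. f x))
     = (\<Sum>S\<in>Pow P. (-1)^card S * (\<Prod>x\<in>S. f x)) + - f p * (\<Prod>x\<in>P. 1 - f x)" .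
  show ?case unfolding X insert.IH using insert.hyps by (simp add: algebra_simps)
qed

lemma odd_prod_primes:
  assumes "finite S" "\<forall>q\<in>S. prime (q::nat)" "2 \<notin> S"
  shows "odd (\<Prod>S)"
proof
  assume "even (\<Prod>S)"
  then obtain q where "q \<in> S" "2 dvd q" using prime_dvd_prod_iff[of S "2::nat" "\<lambda>x. x"] assms by auto
  then show False using assms primes_dvd_imp_eq[of 2 q] by auto
qed

lemma parity_quot:
  assumes "finite S" "\<forall>q\<in>S. prime (q::nat)" "\<Prod>S dvd M" "even M"
  shows "odd (M div \<Prod>S) \<longleftrightarrow> M mod 4 = 2 \<and> 2 \<in> S"
proof (cases "2 \<in> S")
  case False
  have od: "odd (\<Prod>S)" using odd_prod_primes assms False by auto
  obtain q where q: "M = \<Prod>S * q" using assms by auto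
  have "\<Prod>S \<noteq> 0" using od by (metis dvd_0_right)
  then have "M div \<Prod>S = q" using q by simp
  then show ?thesis using q od assms(4) False by auto
next
  case True
  define d where "d = \<Prod>(S - {2})"
  have od: "odd d" unfolding d_def using odd_prod_primes assms by auto
  have pd: "\<Prod>S = 2 * d" unfolding d_def using True assms(1) by (simp add: prod.remove)
  obtain q where q: "M = 2 * d * q" using assms pd by auto
  have "M div \<Prod>S = q" using q od pd by (cases "d = 0") auto
  moreover have "odd q \<longleftrightarrow> M mod 4 = 2"
  proof -
    have "M mod 4 = 2 * ((d * q) mod 2)" using q by (simp add: mult.assoc mult_mod_right)
    moreover have "(d * q) mod 2 = (if odd q then 1 else 0)" using od
      by (metis odd_iff_mod_2_eq_one even_iff_mod_2_eq_zero even_mult_iff)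
    ultimately show ?thesis by simp
  qed
  ultimately show ?thesis using True by auto
qed

lemma prod_primes_dvd:
  assumes "finite P" "\<forall>q\<in>P. prime (q::nat) \<and> q dvd n"
  shows "\<Prod>P dvd n"
  using assms
proof (induction P rule: finite_induct)
  case empty then show ?case by simp
next
  case (insert p P)
  have "coprime p (\<Prod>P)"
  proof (rule prime_imp_coprime)
    show "prime p" using insert by auto
    show "\<not> p dvd \<Prod>P"
    proof
      assume "p dvd \<Prod>P"
      then obtain q where "q \<in> P" "p dvd q" using prime_dvd_prod_iff[of P p "\<lambda>x. x"] insert by auto
      then show False using insert primes_dvd_imp_eq[of p q] by auto
    qed
  qed
  then show ?case using insert by (simp add: divides_mult)
qed

lemma coprime_iff_pf:
  assumes "(L::nat) > 0"
  shows "coprime t L \<longleftrightarrow> (\<forall>q\<in>prime_factors L. \<not> q dvd t)"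
proof
  assume c: "coprime t L"
  show "\<forall>q\<in>prime_factors L. \<not> q dvd t"
  proof (intro ballI notI)
    fix q assume q1: "q \<in> prime_factors L" and q2: "q dvd t"
    have pq: "prime q" using q1 unfolding in_prime_factors_iff by blast
    have qL: "q dvd L" using q1 unfolding in_prime_factors_iff by blast
    have "is_unit q" using coprime_common_divisor[OF c q2 qL] .
    then show False using pq not_prime_unit by blast
  qed
next
  assume h: "\<forall>q\<in>prime_factors L. \<not> q dvd t"
  show "coprime t L"
  proof (rule ccontr)
    assume nc: "\<not> coprime t L"
    have "gcd t L \<noteq> 1" using nc unfolding coprime_iff_gcd_eq_1 .
    then obtain q where q1: "prime q" and q2: "q dvd gcd t L" using prime_factor_nat by blast
    have qt: "q dvd t" using q2 by (rule dvd_trans) simp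
    have qL: "q dvd L" using q2 by (rule dvd_trans) simp
    have "q \<in> prime_factors L" unfolding in_prime_factors_iff using assms q1 qL by simp
    then show False using h qt by blast
  qed
qed

lemma Pow_insert_sum:
  fixes g :: "'a set \<Rightarrow> real"
  assumes "finite A" "a \<notin> A"
  shows "(\<Sum>S\<in>Pow (insert a A). g S) = (\<Sum>S\<in>Pow A. g S) + (\<Sum>S\<in>Pow A. g (insert a S))"
proof -
  have inj: "inj_on (insert a) (Pow A)" using assms(2) by (auto simp: inj_on_def)
  have disj: "Pow A \<inter> insert a ` Pow A = {}" using assms(2) by auto
  have fin: "finite (Pow A)" "finite (insert a ` Pow A)" using assms by auto
  show ?thesis unfolding Pow_insert using disj fin inj by (simp add: sum.union_disjoint sum.reindex)
qed

lemma prod_one_minus: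
  fixes f :: "'a \<Rightarrow> real"
  assumes "finite A"
  shows "(\<Prod>x\<in>A. 1 - f x) = (-1) ^ card A * (\<Prod>x\<in>A. f x - 1)"
  using assms by (induction A rule: finite_induct) (auto simp: algebra_simps)

theorem propositionA1:
  fixes M L :: nat and \<epsilon> :: real
  assumes "0 < M" and "L dvd M" and "rad L > 2"
    and "\<epsilon> = (if odd M then 1
              else if M mod 4 = 2 \<and> even (rad L) then 2
              else 0)"
  shows "real (Isum 1 L M) =
           real (totient (rad L)) *
           (real M ^ 2 / real (rad L) - (-1) ^ card (prime_factors L) * \<epsilon>) / 8"
proof -
  have L0: "L > 0" using assms(1,2) by (cases "L = 0") auto
  define P where "P = prime_factors L"
  define R where "R = rad L"
  have finP: "finite P" unfolding P_def by simp
  have prP: "\<forall>q\<in>P. prime q" unfolding P_def by auto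
  have RP: "R = \<Prod>P" unfolding R_def P_def rad_def by simp
  have dvdS: "\<Prod>S dvd M" if "S \<subseteq> P" for S
  proof (rule prod_primes_dvd)
    show "finite S" using that finP finite_subset by auto
    show "\<forall>q\<in>S. prime q \<and> q dvd M" using that assms(2) unfolding P_def
      by (auto intro: dvd_trans)
  qed
  have Pne: "P \<noteq> {}" using assms(3) RP R_def by auto
  have R0: "real R > 0" using assms(3) R_def by simp
  have Ieq: "Isum 1 L M = GG P M"
    unfolding Isum_def GG_def P_def using coprime_iff_pf[OF L0] by simp
  define c where "c S = (if odd (M div \<Prod>S) then real (\<Prod>S) else 2 * real M)" for S
  have "8 * real (GG P M) = (\<Sum>S\<in>Pow P. (-1)^card S * (real (\<Prod>S) * (8 * real (HH (M div \<Prod>S)))))"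
    using GG_IE[OF finP prP dvdS[OF order_refl]] by (simp add: sum_distrib_left mult_ac)
  also have "\<dots> = (\<Sum>S\<in>Pow P. (-1)^card S * (real M ^ 2 / real (\<Prod>S) - c S))"
    unfolding c_def using term_formula[OF dvdS assms(1)] by (intro sum.cong) auto
  also have "\<dots> = (\<Sum>S\<in>Pow P. real M ^ 2 * ((-1)^card S * (\<Prod>p\<in>S. 1 / real p)) - (-1)^card S * c S)"
  proof (intro sum.cong refl)
    fix S assume "S \<in> Pow P"
    have "(\<Prod>p\<in>S. 1 / real p) = 1 / real (\<Prod>S)" by (simp add: prod_dividef)
    then show "(-1)^card S * (real M ^ 2 / real (\<Prod>S) - c S)
       = real M ^ 2 * ((-1)^card S * (\<Prod>p\<in>S. 1 / real p)) - (-1)^card S * c S"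
      by (simp add: right_diff_distrib)
  qed
  also have "\<dots> = real M ^ 2 * (\<Sum>S\<in>Pow P. (-1)^card S * (\<Prod>p\<in>S. 1 / real p))
                   - (\<Sum>S\<in>Pow P. (-1)^card S * c S)"
    by (simp only: sum_subtractf sum_distrib_left)
  finally have main: "8 * real (GG P M) = real M ^ 2 * (\<Sum>S\<in>Pow P. (-1)^card S * (\<Prod>p\<in>S. 1 / real p))
                   - (\<Sum>S\<in>Pow P. (-1)^card S * c S)" .
  have tot: "real (totient R) = (\<Prod>p\<in>P. real p - 1)"
  proof -
    have "totient (\<Prod>p\<in>P. p) = (\<Prod>p\<in>P. totient p)"
    proof (rule totient_prod_coprime)
      show "pairwise coprime ((\<lambda>p. p) ` P)" using prP
        by (auto simp: pairwise_def primes_coprime)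
      show "inj_on (\<lambda>p. p) P" by simp
    qed
    then have "totient R = (\<Prod>p\<in>P. p - 1)" using prP RP
      by (simp add: totient_prime cong: prod.cong)
    moreover have "(\<Prod>p\<in>P. real (p - 1)) = (\<Prod>p\<in>P. real p - 1)"
      using prP by (intro prod.cong refl) (metis of_nat_1 of_nat_diff prime_ge_1_nat)
    ultimately show ?thesis by simp
  qed
  have A1: "(\<Sum>S\<in>Pow P. (-1)^card S * (\<Prod>p\<in>S. 1 / real p)) = real (totient R) / real R"
  proof -
    have "(\<Sum>S\<in>Pow P. (-1)^card S * (\<Prod>p\<in>S. 1 / real p)) = (\<Prod>p\<in>P. 1 - 1 / real p)"
      by (rule alt_sum[OF finP])
    also have "\<dots> = (\<Prod>p\<in>P. (real p - 1) / real p)"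
      using prP by (intro prod.cong refl) (auto simp: field_simps dest: prime_gt_0_nat)
    also have "\<dots> = real (totient R) / real R" using tot RP by (simp add: prod_dividef)
    finally show ?thesis .
  qed
  have sgn: "(-1) ^ card P * real (totient R) = (\<Prod>p\<in>P. 1 - real p)"
    using prod_one_minus[OF finP, of real] tot by simp
  have A2: "(\<Sum>S\<in>Pow P. (-1)^card S * c S) = (-1) ^ card P * real (totient R) * \<epsilon>"
  proof (cases "odd M")
    case True
    have "(\<Sum>S\<in>Pow P. (-1)^card S * c S) = (\<Sum>S\<in>Pow P. (-1)^card S * (\<Prod>p\<in>S. real p))"
    proof (intro sum.cong refl)
      fix S assume S: "S \<in> Pow P"
      obtain q where q: "M = \<Prod>S * q" using dvdS S by blast
      have "\<Prod>S \<noteq> 0" using q assms(1) by auto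
      then have "M div \<Prod>S = q" using q by simp
      then have "odd (M div \<Prod>S)" using q True by auto
      then show "(-1)^card S * c S = (-1)^card S * (\<Prod>p\<in>S. real p)" unfolding c_def by simp
    qed
    also have "\<dots> = (\<Prod>p\<in>P. 1 - real p)" by (rule alt_sum[OF finP])
    finally show ?thesis using sgn True assms(4) by simp
  next
    case ev: False
    have evM: "even M" using ev by simp
    show ?thesis
    proof (cases "M mod 4 = 2 \<and> 2 \<in> P")
      case False
      have eR: "\<not> (M mod 4 = 2 \<and> even R)"
      proof
        assume h: "M mod 4 = 2 \<and> even R"
        show False
        proof (cases "2 \<in> P")
          case True then show False using h False by blast
        next
          case n2: False
          have "odd R" unfolding RP by (rule odd_prod_primes[OF finP prP n2])
          then show False using h by blast
        qed
      qed
      have "(\<Sum>S\<in>Pow P. (-1)^card S * c S) = 2 * real M * (\<Sum>S\<in>Pow P. (-1)^card S * (\<Prod>p\<in>S. 1::real))"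
        unfolding sum_distrib_left
      proof (intro sum.cong refl)
        fix S assume S: "S \<in> Pow P"
        have fS: "finite S" using S finP finite_subset by auto
        have SP: "S \<subseteq> P" using S by simp
        have prS: "\<forall>q\<in>S. prime q" using prP SP by blast
        have "odd (M div \<Prod>S) \<longleftrightarrow> M mod 4 = 2 \<and> 2 \<in> S"
          by (rule parity_quot[OF fS prS dvdS[OF SP] evM])
        moreover have "\<not> (M mod 4 = 2 \<and> 2 \<in> S)" using False SP by blast
        ultimately have "\<not> odd (M div \<Prod>S)" by blast
        then show "(-1)^card S * c S = 2 * real M * ((-1)^card S * (\<Prod>p\<in>S. 1::real))"
          unfolding c_def by simp
      qed
      also have "\<dots> = 2 * real M * (\<Prod>p\<in>P. 1 - (1::real))" by (subst alt_sum[OF finP]) rule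
      also have "\<dots> = 0" using Pne finP by (simp add: card_gt_0_iff)
      moreover have "\<epsilon> = 0" using assms(4) ev eR unfolding R_def by auto
      ultimately show ?thesis by simp
    next
      case True
      define P' where "P' = P - {2}"
      have PP': "P = insert 2 P'" "2 \<notin> P'" "finite P'" using True finP unfolding P'_def by auto
      have P'ne: "P' \<noteq> {}"
      proof
        assume "P' = {}"
        then have "R = 2" using RP PP' by simp
        then show False using assms(3) R_def by simp
      qed
      have prP': "\<forall>q\<in>P'. prime q" using prP PP' by auto
      have "(\<Sum>S\<in>Pow P. (-1)^card S * c S)
          = (\<Sum>S\<in>Pow P'. (-1)^card S * c S) + (\<Sum>S\<in>Pow P'. (-1)^card (insert 2 S) * c (insert 2 S))"
        unfolding PP'(1) by (rule Pow_insert_sum[OF PP'(3,2)])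
      also have "(\<Sum>S\<in>Pow P'. (-1)^card S * c S) = 2 * real M * (\<Sum>S\<in>Pow P'. (-1)^card S * (\<Prod>p\<in>S. 1::real))"
        unfolding sum_distrib_left
      proof (intro sum.cong refl)
        fix S assume S: "S \<in> Pow P'"
        have fS: "finite S" using S PP' finite_subset by auto
        have SP: "S \<subseteq> P" using S PP' by auto
        have prS: "\<forall>q\<in>S. prime q" using prP SP by blast
        have "odd (M div \<Prod>S) \<longleftrightarrow> M mod 4 = 2 \<and> 2 \<in> S"
          by (rule parity_quot[OF fS prS dvdS[OF SP] evM])
        moreover have "2 \<notin> S" using S PP' by auto
        ultimately have "\<not> odd (M div \<Prod>S)" by blast
        then show "(-1)^card S * c S = 2 * real M * ((-1)^card S * (\<Prod>p\<in>S. 1::real))"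
          unfolding c_def by simp
      qed
      also have "\<dots> = 2 * real M * (\<Prod>p\<in>P'. 1 - (1::real))" by (subst alt_sum[OF PP'(3)]) rule
      also have "\<dots> = 0" using P'ne PP' by (simp add: card_gt_0_iff)
      also have "(\<Sum>S\<in>Pow P'. (-1)^card (insert 2 S) * c (insert 2 S))
               = (\<Sum>S\<in>Pow P'. (-2) * ((-1)^card S * (\<Prod>p\<in>S. real p)))"
      proof (intro sum.cong refl)
        fix S assume S: "S \<in> Pow P'"
        have fS: "finite S" using S PP' finite_subset by auto
        have n2: "2 \<notin> S" using S PP' by auto
        have SP: "insert 2 S \<subseteq> P" using S PP' by auto
        have prS: "\<forall>q\<in>insert 2 S. prime q" using prP SP by blast
        have "odd (M div \<Prod>(insert 2 S)) \<longleftrightarrow> M mod 4 = 2 \<and> 2 \<in> insert 2 S"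
          by (rule parity_quot[OF _ prS dvdS[OF SP] evM]) (use fS in simp)
        then have "odd (M div \<Prod>(insert 2 S))" using True by blast
        then show "(-1)^card (insert 2 S) * c (insert 2 S) = (-2) * ((-1)^card S * (\<Prod>p\<in>S. real p))"
          unfolding c_def using fS n2 by simp
      qed
      also have "\<dots> = (-2) * (\<Prod>p\<in>P'. 1 - real p)"
        by (simp add: sum_negf alt_sum[OF PP'(3)] flip: sum_distrib_left)
      finally have "(\<Sum>S\<in>Pow P. (-1)^card S * c S) = 2 * (\<Prod>p\<in>P. 1 - real p)"
        using PP' by simp
      moreover have "\<epsilon> = 2"
      proof -
        have "even R" unfolding RP PP'(1) using PP' by simp
        then show ?thesis using assms(4) evM True unfolding R_def by simp
      qed
      ultimately show ?thesis using sgn by simp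
    qed
  qed
  have "8 * real (Isum 1 L M) = real M ^ 2 * (real (totient R) / real R) - (-1) ^ card P * real (totient R) * \<epsilon>"
    using main A1 A2 Ieq by simp
  then show ?thesis unfolding R_def[symmetric] P_def[symmetric] using R0
    by (simp add: field_simps)
qed

end
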